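(* Under Assumption 1, let $(x_t,y_t)$ be generated by SBFW with step sizes satisfying $\delta_t\le\min\{\frac{2}{3\mu_g},\frac{\mu_g}{2(1+\sigma_g^2)L_g^2}\}$ and $\eta_t\in[0,1]$. Then for all $t\ge2$, $$\mathbb E_t\|y_t-y^*(x_t)\|^2\le\Big(1-\frac{\delta_t\mu_g}{2}\Big)\|y_{t-1}-y^*(x_{t-1})\|^2+\frac{2\eta_{t-1}^2}{\delta_t\mu_g}\Big(\frac{C_{xy}}{\mu_g}\Big)^2D^2+4\delta_t^2\sigma_g^2.$$
   Context: Setting. $\mathcal X\subset\mathbb R^m$ is nonempty, convex and compact, with diameter $D=\max_{x,x'\in\mathcal X}\|x-x'\|$. $\theta,\xi$ are independent random variables; $f(x,y;\theta)$ and $g(x,y;\xi)$ map $\mathbb R^m\times\mathbb R^n\to\mathbb R$, with $g(\cdot,\cdot;\xi)$ twice continuously differentiable. Put $F(x,y)=\mathbb E_\theta f(x,y;\theta)$ and $G(x,y)=\mathbb E_\xi g(x,y;\xi)$; derivatives of $F,G$ are expectations of those of $f,g$. Let $y^*(x)=\arg\min_{y\in\mathbb R^n}G(x,y)$. Assumption 1. (i) $\mathbb E\|\nabla_xF(x,y)-\nabla_xf(x,y;\theta)\|^2\le\sigma_x^2$, $\mathbb E\|\nabla_yF(x,y)-\nabla_yf(x,y;\theta)\|^2\le\sigma_y^2$, $\mathbb E\|\nabla^2_{xy}G(x,y)-\nabla^2_{xy}g(x,y;\xi)\|^2\le\sigma_{xy}^2$, $\mathbb E\|\nabla_yG(x,y)-\nabla_yg(x,y;\xi)\|^2\le\sigma_g^2$.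 (ii) For each $x\in\mathcal X$, the maps $y\mapsto\nabla_xF,\nabla_yF,\nabla_yG,\nabla^2_{xy}G,\nabla^2_{yy}G$ are Lipschitz with constants $L_{f_x},L_{f_y},L_g,L_{g_{xy}},L_{g_{yy}}$ respectively. (iii) For each $y$, the maps $x\mapsto\nabla_yF,\nabla^2_{xy}G,\nabla^2_{yy}G$ are Lipschitz with constants $L_{f_y},L_{g_{xy}},L_{g_{yy}}$. (iv) For all $x\in\mathcal X$, $y\in\mathbb R^n$: $\mathbb E\|\nabla_yf(x,y;\theta)\|\le C_y$, $\mathbb E\|\nabla^2_{xy}g(x,y;\xi)\|\le C_{xy}$. (v) $G(x,\cdot)$ is $\mu_g$-strongly convex for every $x\in\mathcal X$. Algorithm SBFW (relevant part). Fresh samples $\xi_t$ are drawn at iteration $t$ independently of the past. $x_1\in\mathcal X$, $y_1\in\mathbb R^n$; for $t\ge2$, $y_t=y_{t-1}-\delta_t\nabla_yg(x_{t-1},y_{t-1};\xi_t)$; for $t\ge1$, $d_t$ is some $\mathbb R^m$-valued direction, $s_t\in\arg\min_{s\in\mathcal X}\langle s,d_t\rangle$ and $x_{t+1}=(1-\eta_t)x_t+\eta_ts_t$ (so $x_t\in\mathcal X$). $\mathcal F_t$ is the σ-field of all randomness drawn before iteration $t$'s fresh samples (so $x_{t-1},y_{t-1},x_t$ are $\mathcal F_t$-measurable), and $\mathbb E_t=\mathbb E[\cdot\mid\mathcal F_t]$. *)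

theory Defs
  imports "HOL-Analysis.Analysis" "HOL-Probability.Probability"
begin

definition strongly_convex_on :: "real \<Rightarrow> 'a::real_normed_vector set \<Rightarrow> ('a \<Rightarrow> real) \<Rightarrow> bool" where
  "strongly_convex_on \<mu> S f \<longleftrightarrow> convex S \<and>
     (\<forall>u\<in>S. \<forall>v\<in>S. \<forall>a::real. 0 \<le> a \<and> a \<le> 1 \<longrightarrow>
        f (a *\<^sub>R u + (1 - a) *\<^sub>R v) \<le> a * f u + (1 - a) * f v - \<mu> / 2 * a * (1 - a) * (norm (u - v))\<^sup>2)"

definition twice_cont_diff :: "('a::real_normed_vector \<Rightarrow> real) \<Rightarrow> bool" where
  "twice_cont_diff f \<longleftrightarrow> (\<exists>Df D2f.
      (\<forall>z. (f has_derivative blinfun_apply (Df z)) (at z)) \<and>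
      (\<forall>z. (Df has_derivative blinfun_apply (D2f z)) (at z)) \<and>
      continuous_on UNIV D2f)"

definition ystar :: "('a \<Rightarrow> 'b \<Rightarrow> real) \<Rightarrow> 'a \<Rightarrow> 'b" where
  "ystar G x = (THE y. \<forall>y'. G x y \<le> G x y')"

end

theory Submission
  imports Defs
begin

lemma sc_tangent:
  fixes f :: "'b::euclidean_space \<Rightarrow> real"
  assumes sc: "strongly_convex_on \<mu> UNIV f"
    and der: "\<And>v. (f has_derivative (\<lambda>k. D v \<bullet> k)) (at v)"
  shows "f z \<ge> f v + D v \<bullet> (z - v) + \<mu>/2 * (norm (z - v))\<^sup>2"
proof -
  define p where "p t = v + t *\<^sub>R (z - v)" for t :: real
  define \<phi> where "\<phi> t = f (p t) - \<mu>/2 * t\<^sup>2 * (norm (z - v))\<^sup>2" for t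
  have cvx: "convex_on UNIV \<phi>"
  proof (rule convex_onI)
    fix a t2 t1 :: real assume a: "0 < a" "a < 1"
    have pc: "p (a * t1 + (1 - a) * t2) = a *\<^sub>R p t1 + (1 - a) *\<^sub>R p t2"
      unfolding p_def by (simp add: algebra_simps)
    have "p t1 - p t2 = (t1 - t2) *\<^sub>R (z - v)"
      unfolding p_def by (simp add: algebra_simps)
    hence np: "norm (p t1 - p t2) = \<bar>t1 - t2\<bar> * norm (z - v)" by simp
    have "f (p (a * t1 + (1 - a) * t2)) \<le> a * f (p t1) + (1 - a) * f (p t2) - \<mu>/2 * a * (1 - a) * (norm (p t1 - p t2))\<^sup>2"
      using sc a unfolding strongly_convex_on_def pc by auto
    also have "(norm (p t1 - p t2))\<^sup>2 = (t1 - t2)\<^sup>2 * (norm (z - v))\<^sup>2"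
      unfolding np by (simp add: power_mult_distrib)
    finally have *: "f (p (a * t1 + (1 - a) * t2)) \<le> a * f (p t1) + (1 - a) * f (p t2) - \<mu>/2 * a * (1 - a) * ((t1 - t2)\<^sup>2 * (norm (z - v))\<^sup>2)" .
    have e: "(a * t1 + (1 - a) * t2)\<^sup>2 = a * t1\<^sup>2 + (1 - a) * t2\<^sup>2 - a * (1 - a) * (t1 - t2)\<^sup>2"
      by (simp add: power2_eq_square algebra_simps)
    have main: "\<phi> (a * t1 + (1 - a) * t2) \<le> a * \<phi> t1 + (1 - a) * \<phi> t2"
    proof -
      define N where "N = (norm (z - v))\<^sup>2"
      have 1: "\<phi> (a * t1 + (1 - a) * t2) = f (p (a * t1 + (1 - a) * t2)) - \<mu>/2 * (a * t1\<^sup>2 + (1 - a) * t2\<^sup>2 - a * (1 - a) * (t1 - t2)\<^sup>2) * N"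
        unfolding \<phi>_def e N_def ..
      have 2: "a * \<phi> t1 + (1 - a) * \<phi> t2 = a * f (p t1) + (1 - a) * f (p t2) - \<mu>/2 * (a * t1\<^sup>2 + (1 - a) * t2\<^sup>2) * N"
        unfolding \<phi>_def N_def[symmetric] by (simp add: field_simps)
      have 3: "\<mu>/2 * (a * t1\<^sup>2 + (1 - a) * t2\<^sup>2 - a * (1 - a) * (t1 - t2)\<^sup>2) * N = \<mu>/2 * (a * t1\<^sup>2 + (1 - a) * t2\<^sup>2) * N - \<mu>/2 * a * (1 - a) * ((t1 - t2)\<^sup>2 * N)"
        by (simp add: field_simps)
      have 4: "f (p (a * t1 + (1 - a) * t2)) \<le> a * f (p t1) + (1 - a) * f (p t2) - \<mu>/2 * a * (1 - a) * ((t1 - t2)\<^sup>2 * N)"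
        using * unfolding N_def .
      show ?thesis unfolding 1 2 3 using 4 by linarith
    qed
    show "\<phi> ((1 - a) *\<^sub>R t2 + a *\<^sub>R t1) \<le> (1 - a) * \<phi> t2 + a * \<phi> t1"
      using main by (simp add: add.commute mult.commute)
  next
    show "convex (UNIV::real set)" by simp
  qed
  have dp: "(p has_derivative (\<lambda>h. h *\<^sub>R (z - v))) (at 0)"
    unfolding p_def by (auto intro!: derivative_eq_intros)
  have df: "((\<lambda>t. f (p t)) has_derivative (\<lambda>h. D (p 0) \<bullet> (h *\<^sub>R (z - v)))) (at 0)"
    using has_derivative_compose[OF dp der] by simp
  have "(\<phi> has_derivative (\<lambda>h. h * (D v \<bullet> (z - v)) - \<mu>/2 * (2 * 0 * h) * (norm (z - v))\<^sup>2)) (at 0)"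
    unfolding \<phi>_def using df
    by (auto intro!: derivative_eq_intros simp: p_def)
  hence "(\<phi> has_field_derivative (D v \<bullet> (z - v))) (at 0 within UNIV)"
    by (simp add: has_field_derivative_def mult.commute[of _ "D v \<bullet> (z - v)"])
  from convex_on_imp_above_tangent[OF cvx _ _ _ this, of 1]
  have "\<phi> 1 - \<phi> 0 \<ge> D v \<bullet> (z - v)" by simp
  thus ?thesis unfolding \<phi>_def p_def by simp
qed

lemma sc_mono:
  fixes f :: "'b::euclidean_space \<Rightarrow> real"
  assumes sc: "strongly_convex_on \<mu> UNIV f"
    and der: "\<And>v. (f has_derivative (\<lambda>k. D v \<bullet> k)) (at v)"
  shows "(D z - D v) \<bullet> (z - v) \<ge> \<mu> * (norm (z - v))\<^sup>2"
proof -
  have 1: "f z \<ge> f v + D v \<bullet> (z - v) + \<mu>/2 * (norm (z - v))\<^sup>2" by (rule sc_tangent[OF sc der])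
  have 2: "f v \<ge> f z + D z \<bullet> (v - z) + \<mu>/2 * (norm (v - z))\<^sup>2" by (rule sc_tangent[OF sc der])
  have 3: "D z \<bullet> (v - z) = - (D z \<bullet> (z - v))" by (simp add: inner_diff_right)
  have 4: "norm (v - z) = norm (z - v)" by (rule norm_minus_commute)
  show ?thesis using 1 2 unfolding 3 4 by (simp add: inner_diff_left)
qed

lemma sc_argmin:
  fixes f :: "'b::euclidean_space \<Rightarrow> real"
  assumes sc: "strongly_convex_on \<mu> UNIV f"
    and der: "\<And>v. (f has_derivative (\<lambda>k. D v \<bullet> k)) (at v)"
    and mu: "0 < \<mu>"
  shows "\<exists>!m. \<forall>y. f m \<le> f y"
proof -
  define R where "R = 2 * norm (D 0) / \<mu>"
  have cont: "continuous_on (cball 0 R) f"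
    by (intro continuous_at_imp_continuous_on ballI has_derivative_continuous[OF der])
  have "0 \<le> R" unfolding R_def using mu by simp
  hence ne: "cball (0::'b) R \<noteq> {}" by simp
  obtain m where m: "m \<in> cball 0 R" "\<And>y. y \<in> cball 0 R \<Longrightarrow> f m \<le> f y"
    using continuous_attains_inf[OF compact_cball ne cont] by blast
  have f0: "f m \<le> f 0" using m(2) \<open>0 \<le> R\<close> by simp
  have mall: "f m \<le> f y" for y
  proof (cases "y \<in> cball 0 R")
    case True thus ?thesis using m(2) by blast
  next
    case False
    hence yR: "norm y > R" by simp
    have t: "f y \<ge> f 0 + D 0 \<bullet> (y - 0) + \<mu>/2 * (norm (y - 0))\<^sup>2" by (rule sc_tangent[OF sc der])
    have cs: "- (D 0 \<bullet> y) \<le> norm (D 0) * norm y"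
      using norm_cauchy_schwarz[of "D 0" "- y"] by simp
    have "\<mu>/2 * norm y \<ge> norm (D 0)" using yR mu unfolding R_def by (simp add: field_simps)
    hence "norm y * (\<mu>/2 * norm y - norm (D 0)) \<ge> 0" by simp
    hence "\<mu>/2 * (norm y)\<^sup>2 - norm (D 0) * norm y \<ge> 0" by (simp add: power2_eq_square algebra_simps)
    thus ?thesis using t cs f0 by simp
  qed
  have grad0: "D m = 0" if "\<forall>y. f m \<le> f y" for m
  proof -
    have "(\<lambda>k. D m \<bullet> k) = (\<lambda>v. 0)"
      by (rule differential_zero_maxmin[of m UNIV f]) (use der that in auto)
    hence "D m \<bullet> D m = 0" by metis
    thus ?thesis by simp
  qed
  show ?thesis
  proof (rule ex1I[of _ m])
    show "\<forall>y. f m \<le> f y" using mall by blast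
  next
    fix m' assume m': "\<forall>y. f m' \<le> f y"
    have t: "f m \<ge> f m' + D m' \<bullet> (m - m') + \<mu>/2 * (norm (m - m'))\<^sup>2" by (rule sc_tangent[OF sc der])
    hence "\<mu>/2 * (norm (m - m'))\<^sup>2 \<le> 0" using grad0[OF m'] mall[of m'] by simp
    hence "(norm (m - m'))\<^sup>2 \<le> 0" using mu by (simp add: mult_le_0_iff)
    thus "m' = m" by simp
  qed
qed

lemma ystar_props:
  fixes f :: "'a \<Rightarrow> 'b::euclidean_space \<Rightarrow> real"
  assumes sc: "strongly_convex_on \<mu> UNIV (f u)"
    and der: "\<And>v. (f u has_derivative (\<lambda>k. D v \<bullet> k)) (at v)"
    and mu: "0 < \<mu>"
  shows "\<forall>y. f u (ystar f u) \<le> f u y" and "D (ystar f u) = 0"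
proof -
  show mm: "\<forall>y. f u (ystar f u) \<le> f u y"
    unfolding ystar_def by (rule theI'[OF sc_argmin[OF sc der mu]])
  have "(\<lambda>k. D (ystar f u) \<bullet> k) = (\<lambda>v. 0)"
    by (rule differential_zero_maxmin[of "ystar f u" UNIV "f u"]) (use der mm in auto)
  hence "D (ystar f u) \<bullet> D (ystar f u) = 0" by metis
  thus "D (ystar f u) = 0" by simp
qed

theorem lemma1:
  fixes M :: "'c measure"
    and X :: "'a::euclidean_space set"
    and g :: "'a \<Rightarrow> 'b::euclidean_space \<Rightarrow> 'c \<Rightarrow> real"
    and gy :: "'a \<Rightarrow> 'b \<Rightarrow> 'c \<Rightarrow> 'b"
    and gxy :: "'a \<Rightarrow> 'b \<Rightarrow> 'c \<Rightarrow> ('a \<Rightarrow>\<^sub>L 'b)"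
    and gyy :: "'a \<Rightarrow> 'b \<Rightarrow> 'c \<Rightarrow> ('b \<Rightarrow>\<^sub>L 'b)"
    and G :: "'a \<Rightarrow> 'b \<Rightarrow> real"
    and Gy :: "'a \<Rightarrow> 'b \<Rightarrow> 'b"
    and Gxy :: "'a \<Rightarrow> 'b \<Rightarrow> ('a \<Rightarrow>\<^sub>L 'b)"
    and Gyy :: "'a \<Rightarrow> 'b \<Rightarrow> ('b \<Rightarrow>\<^sub>L 'b)"
    and \<sigma>xy \<sigma>g Lg Lgxy Lgyy Cxy \<mu>g :: real
    and x s :: 'a and y :: 'b and \<delta> \<eta> :: real
  assumes prob: "prob_space M"
    (* the feasible set *)
    and X_ne: "X \<noteq> {}" and X_convex: "convex X" and X_compact: "compact X"
    (* lower-level sample function: C^2, with its partial derivatives *)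
    and g_C2: "\<And>\<xi>. twice_cont_diff (\<lambda>(u, v). g u v \<xi>)"
    and gy_deriv: "\<And>u v \<xi>. ((\<lambda>v'. g u v' \<xi>) has_derivative (\<lambda>k. gy u v \<xi> \<bullet> k)) (at v)"
    and gxy_deriv: "\<And>u v \<xi>. ((\<lambda>u'. gy u' v \<xi>) has_derivative blinfun_apply (gxy u v \<xi>)) (at u)"
    and gyy_deriv: "\<And>u v \<xi>. ((\<lambda>v'. gy u v' \<xi>) has_derivative blinfun_apply (gyy u v \<xi>)) (at v)"
    (* G = E g, and derivatives of G are expectations of those of g *)
    and g_int: "\<And>u v. integrable M (g u v)"
    and G_def: "\<And>u v. G u v = (\<integral>\<xi>. g u v \<xi> \<partial>M)"
    and gy_int: "\<And>u v. integrable M (gy u v)"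
    and Gy_def: "\<And>u v. Gy u v = (\<integral>\<xi>. gy u v \<xi> \<partial>M)"
    and gxy_int: "\<And>u v h. integrable M (\<lambda>\<xi>. blinfun_apply (gxy u v \<xi>) h)"
    and Gxy_def: "\<And>u v h. blinfun_apply (Gxy u v) h = (\<integral>\<xi>. blinfun_apply (gxy u v \<xi>) h \<partial>M)"
    and gyy_int: "\<And>u v h. integrable M (\<lambda>\<xi>. blinfun_apply (gyy u v \<xi>) h)"
    and Gyy_def: "\<And>u v h. blinfun_apply (Gyy u v) h = (\<integral>\<xi>. blinfun_apply (gyy u v \<xi>) h \<partial>M)"
    and Gy_deriv: "\<And>u v. ((\<lambda>v'. G u v') has_derivative (\<lambda>k. Gy u v \<bullet> k)) (at v)"
    and Gxy_deriv: "\<And>u v. ((\<lambda>u'. Gy u' v) has_derivative blinfun_apply (Gxy u v)) (at u)"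
    and Gyy_deriv: "\<And>u v. ((\<lambda>v'. Gy u v') has_derivative blinfun_apply (Gyy u v)) (at v)"
    (* Assumption 1 (i), g-part: variance bounds *)
    and var_xy_int: "\<And>u v. u \<in> X \<Longrightarrow> integrable M (\<lambda>\<xi>. (norm (Gxy u v - gxy u v \<xi>))\<^sup>2)"
    and var_xy: "\<And>u v. u \<in> X \<Longrightarrow> (\<integral>\<xi>. (norm (Gxy u v - gxy u v \<xi>))\<^sup>2 \<partial>M) \<le> \<sigma>xy\<^sup>2"
    and var_g_int: "\<And>u v. u \<in> X \<Longrightarrow> integrable M (\<lambda>\<xi>. (norm (Gy u v - gy u v \<xi>))\<^sup>2)"
    and var_g: "\<And>u v. u \<in> X \<Longrightarrow> (\<integral>\<xi>. (norm (Gy u v - gy u v \<xi>))\<^sup>2 \<partial>M) \<le> \<sigma>g\<^sup>2"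
    (* Assumption 1 (ii), g-part: Lipschitz in y *)
    and Lip_Gy: "\<And>u. u \<in> X \<Longrightarrow> Lg-lipschitz_on UNIV (Gy u)"
    and Lip_Gxy_y: "\<And>u. u \<in> X \<Longrightarrow> Lgxy-lipschitz_on UNIV (Gxy u)"
    and Lip_Gyy_y: "\<And>u. u \<in> X \<Longrightarrow> Lgyy-lipschitz_on UNIV (Gyy u)"
    (* Assumption 1 (iii), g-part: Lipschitz in x *)
    and Lip_Gxy_x: "\<And>v. Lgxy-lipschitz_on X (\<lambda>u. Gxy u v)"
    and Lip_Gyy_x: "\<And>v. Lgyy-lipschitz_on X (\<lambda>u. Gyy u v)"
    (* Assumption 1 (iv), g-part *)
    and Cxy_int: "\<And>u v. u \<in> X \<Longrightarrow> integrable M (\<lambda>\<xi>. norm (gxy u v \<xi>))"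
    and Cxy_bound: "\<And>u v. u \<in> X \<Longrightarrow> (\<integral>\<xi>. norm (gxy u v \<xi>) \<partial>M) \<le> Cxy"
    (* Assumption 1 (v) *)
    and mu_pos: "0 < \<mu>g"
    and strong_cvx: "\<And>u. u \<in> X \<Longrightarrow> strongly_convex_on \<mu>g UNIV (G u)"
    (* one SBFW step: x = x_{t-1}, y = y_{t-1}, s = s_{t-1}, x_t = (1-\<eta>) x + \<eta> s,
       y_t = y - \<delta> \<nabla>_y g(x, y; \<xi>_t), \<delta> = \<delta>_t, \<eta> = \<eta>_{t-1} *)
    and x_in: "x \<in> X" and s_in: "s \<in> X"
    and eta: "0 \<le> \<eta>" "\<eta> \<le> 1"
    and delta_pos: "0 < \<delta>"
    and delta_le: "\<delta> \<le> min (2 / (3 * \<mu>g)) (\<mu>g / (2 * (1 + \<sigma>g\<^sup>2) * Lg\<^sup>2))"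
  shows "(\<integral>\<xi>. (norm (y - \<delta> *\<^sub>R gy x y \<xi> - ystar G ((1 - \<eta>) *\<^sub>R x + \<eta> *\<^sub>R s)))\<^sup>2 \<partial>M)
           \<le> (1 - \<delta> * \<mu>g / 2) * (norm (y - ystar G x))\<^sup>2
              + 2 * \<eta>\<^sup>2 / (\<delta> * \<mu>g) * (Cxy / \<mu>g)\<^sup>2 * (diameter X)\<^sup>2
              + 4 * \<delta>\<^sup>2 * \<sigma>g\<^sup>2"
proof -
  interpret P: prob_space M by (rule prob)
  define x' where "x' = (1 - \<eta>) *\<^sub>R x + \<eta> *\<^sub>R s"
  define c where "c = ystar G x"
  define b where "b = ystar G x'"
  have x'_in: "x' \<in> X" unfolding x'_def using X_convex x_in s_in eta
    by (simp add: convex_alt)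
  have derG: "\<And>u v. (G u has_derivative (\<lambda>k. Gy u v \<bullet> k)) (at v)"
    using Gy_deriv by simp
  have c0: "Gy x c = 0" unfolding c_def
    by (rule ystar_props(2)[of _ G x "Gy x", OF strong_cvx[OF x_in] derG mu_pos])
  have b0: "Gy x' b = 0" unfolding b_def
    by (rule ystar_props(2)[of _ G x' "Gy x'", OF strong_cvx[OF x'_in] derG mu_pos])
  have mono: "(Gy u z - Gy u v) \<bullet> (z - v) \<ge> \<mu>g * (norm (z - v))\<^sup>2" if "u \<in> X" for u z v
    by (rule sc_mono[of _ "G u" "Gy u", OF strong_cvx[OF that] derG])
  have Lg0: "0 \<le> Lg" using Lip_Gy[OF x_in] by (simp add: lipschitz_on_def)
  have "0 \<le> (\<integral>\<xi>. norm (gxy x y \<xi>) \<partial>M)" by (rule Bochner_Integration.integral_nonneg) simp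
  hence Cxy0: "0 \<le> Cxy" using Cxy_bound[OF x_in, of y] by linarith
  have Gxy_bd: "norm (Gxy u v) \<le> Cxy" if u: "u \<in> X" for u v
  proof (rule norm_blinfun_bound[OF Cxy0])
    fix h
    have "norm (blinfun_apply (Gxy u v) h) = norm (\<integral>\<xi>. blinfun_apply (gxy u v \<xi>) h \<partial>M)"
      by (simp add: Gxy_def)
    also have "\<dots> \<le> (\<integral>\<xi>. norm (blinfun_apply (gxy u v \<xi>) h) \<partial>M)"
      by (rule integral_norm_bound)
    also have "\<dots> \<le> (\<integral>\<xi>. norm (gxy u v \<xi>) * norm h \<partial>M)"
      by (rule integral_mono) (use gxy_int Cxy_int[OF u] norm_blinfun in auto)
    also have "\<dots> = (\<integral>\<xi>. norm (gxy u v \<xi>) \<partial>M) * norm h" by simp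
    also have "\<dots> \<le> Cxy * norm h" using Cxy_bound[OF u] by (simp add: mult_right_mono)
    finally show "norm (blinfun_apply (Gxy u v) h) \<le> Cxy * norm h" .
  qed
  have GyLip: "norm (Gy u' v - Gy u v) \<le> Cxy * norm (u' - u)" if "u \<in> X" "u' \<in> X" for u u' v
  proof -
    have "norm (Gy u' v - Gy u v) \<le> Cxy * norm (u' - u)"
    proof (rule differentiable_bound[OF X_convex _ _ that(2) that(1)])
      fix w assume "w \<in> X"
      show "((\<lambda>u. Gy u v) has_derivative blinfun_apply (Gxy w v)) (at w within X)"
        using Gxy_deriv by (rule has_derivative_at_withinI)
      show "onorm (blinfun_apply (Gxy w v)) \<le> Cxy"
        using Gxy_bd[OF \<open>w \<in> X\<close>] by (simp add: norm_blinfun.rep_eq)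
    qed
    thus ?thesis .
  qed
  have cb: "\<mu>g * norm (c - b) \<le> Cxy * norm (x' - x)"
  proof (cases "c = b")
    case True thus ?thesis using Cxy0 by simp
  next
    case False
    have "\<mu>g * (norm (c - b))\<^sup>2 \<le> (Gy x' c - Gy x' b) \<bullet> (c - b)" by (rule mono[OF x'_in])
    also have "\<dots> = (Gy x' c - Gy x c) \<bullet> (c - b)" using b0 c0 by simp
    also have "\<dots> \<le> norm (Gy x' c - Gy x c) * norm (c - b)" by (rule norm_cauchy_schwarz)
    also have "\<dots> \<le> Cxy * norm (x' - x) * norm (c - b)"
      by (rule mult_right_mono[OF GyLip[OF x_in x'_in]]) simp
    finally have "\<mu>g * norm (c - b) * norm (c - b) \<le> Cxy * norm (x' - x) * norm (c - b)"
      by (simp add: power2_eq_square mult.assoc)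
    thus ?thesis using False by simp
  qed
  have xx: "norm (x' - x) = \<eta> * norm (s - x)"
  proof -
    have "x' - x = \<eta> *\<^sub>R (s - x)" unfolding x'_def by (simp add: algebra_simps)
    thus ?thesis using eta by simp
  qed
  have sxD: "norm (s - x) \<le> diameter X"
    using diameter_bounded_bound[OF compact_imp_bounded[OF X_compact] s_in x_in] by (simp add: dist_norm)
  have cb2: "(norm (c - b))\<^sup>2 \<le> (Cxy / \<mu>g)\<^sup>2 * \<eta>\<^sup>2 * (diameter X)\<^sup>2"
  proof -
    have "norm (c - b) \<le> Cxy / \<mu>g * (\<eta> * diameter X)"
    proof -
      have "norm (c - b) \<le> Cxy / \<mu>g * norm (x' - x)" using cb mu_pos by (simp add: field_simps)
      also have "\<dots> \<le> Cxy / \<mu>g * (\<eta> * diameter X)" unfolding xx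
        using Cxy0 mu_pos eta sxD by (intro mult_left_mono) (auto intro: mult_left_mono)
      finally show ?thesis .
    qed
    hence "(norm (c - b))\<^sup>2 \<le> (Cxy / \<mu>g * (\<eta> * diameter X))\<^sup>2"
      by (intro power_mono) simp_all
    thus ?thesis by (simp only: power_mult_distrib mult.assoc)
  qed
  define r where "r = norm (y - c)"
  define w where "w = y - c - \<delta> *\<^sub>R Gy x y"
  have GyN: "norm (Gy x y) \<le> Lg * r"
    using lipschitz_onD[OF Lip_Gy[OF x_in], of y c] c0 unfolding r_def by (simp add: dist_norm)
  have Gyin: "Gy x y \<bullet> (y - c) \<ge> \<mu>g * r\<^sup>2" using mono[OF x_in, of y c] c0 unfolding r_def by simp
  have dL: "\<delta>\<^sup>2 * Lg\<^sup>2 \<le> \<delta> * \<mu>g / 2"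
  proof (cases "Lg = 0")
    case True thus ?thesis using delta_pos mu_pos by simp
  next
    case False
    have "\<delta> \<le> \<mu>g / (2 * (1 + \<sigma>g\<^sup>2) * Lg\<^sup>2)" using delta_le by simp
    hence "\<delta> * (2 * (1 + \<sigma>g\<^sup>2) * Lg\<^sup>2) \<le> \<mu>g" using False
      by (simp add: pos_le_divide_eq add_pos_nonneg)
    moreover have "\<delta> * (2 * Lg\<^sup>2) \<le> \<delta> * (2 * (1 + \<sigma>g\<^sup>2) * Lg\<^sup>2)"
      using delta_pos by (intro mult_left_mono) (auto simp: algebra_simps)
    ultimately have "\<delta> * (2 * Lg\<^sup>2) \<le> \<mu>g" by linarith
    hence "\<delta> * (\<delta> * (2 * Lg\<^sup>2)) \<le> \<delta> * \<mu>g" using delta_pos by (intro mult_left_mono) auto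
    thus ?thesis by (simp add: power2_eq_square algebra_simps)
  qed
  have wN: "(norm w)\<^sup>2 \<le> (1 - 3 * (\<delta> * \<mu>g / 2)) * r\<^sup>2"
  proof -
    have "(norm w)\<^sup>2 = r\<^sup>2 - 2 * \<delta> * (Gy x y \<bullet> (y - c)) + \<delta>\<^sup>2 * (norm (Gy x y))\<^sup>2"
      unfolding w_def r_def power2_norm_eq_inner
      by (simp add: inner_diff_left inner_diff_right inner_commute power2_eq_square algebra_simps)
    moreover have "\<delta>\<^sup>2 * (norm (Gy x y))\<^sup>2 \<le> \<delta>\<^sup>2 * (Lg * r)\<^sup>2"
      using GyN by (intro mult_left_mono power_mono) auto
    moreover have "2 * \<delta> * (\<mu>g * r\<^sup>2) \<le> 2 * \<delta> * (Gy x y \<bullet> (y - c))"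
      using Gyin delta_pos by simp
    moreover have "\<delta>\<^sup>2 * (Lg * r)\<^sup>2 \<le> \<delta> * \<mu>g / 2 * r\<^sup>2"
    proof -
      have "\<delta>\<^sup>2 * Lg\<^sup>2 * r\<^sup>2 \<le> \<delta> * \<mu>g / 2 * r\<^sup>2" using dL by (rule mult_right_mono) simp
      thus ?thesis by (simp add: power_mult_distrib mult.assoc)
    qed
    ultimately show ?thesis by (simp add: algebra_simps)
  qed
  define e where "e \<xi> = Gy x y - gy x y \<xi>" for \<xi>
  define v where "v = y - \<delta> *\<^sub>R Gy x y - b"
  define V where "V = (\<integral>\<xi>. (norm (e \<xi>))\<^sup>2 \<partial>M)"
  have Vb: "V \<le> \<sigma>g\<^sup>2" unfolding V_def e_def using var_g[OF x_in] .
  have eint: "integrable M e" unfolding e_def using gy_int by auto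
  have e0: "(\<integral>\<xi>. e \<xi> \<partial>M) = 0"
    unfolding e_def using gy_int by (simp add: Gy_def P.prob_space)
  have pt: "(norm (y - \<delta> *\<^sub>R gy x y \<xi> - b))\<^sup>2 = (norm v)\<^sup>2 + 2 * \<delta> * (v \<bullet> e \<xi>) + \<delta>\<^sup>2 * (norm (e \<xi>))\<^sup>2" for \<xi>
  proof -
    have "y - \<delta> *\<^sub>R gy x y \<xi> - b = v + \<delta> *\<^sub>R e \<xi>" unfolding v_def e_def by (simp add: algebra_simps)
    hence "(norm (y - \<delta> *\<^sub>R gy x y \<xi> - b))\<^sup>2 = (norm (v + \<delta> *\<^sub>R e \<xi>))\<^sup>2" by simp
    thus ?thesis unfolding power2_norm_eq_inner
      by (simp add: inner_add_left inner_add_right inner_commute power2_eq_square algebra_simps)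
  qed
  have i2: "integrable M (\<lambda>\<xi>. (norm (e \<xi>))\<^sup>2)" unfolding e_def using var_g_int[OF x_in] .
  have E: "(\<integral>\<xi>. (norm (y - \<delta> *\<^sub>R gy x y \<xi> - b))\<^sup>2 \<partial>M) = (norm v)\<^sup>2 + \<delta>\<^sup>2 * V"
  proof -
    have "(\<integral>\<xi>. (norm (y - \<delta> *\<^sub>R gy x y \<xi> - b))\<^sup>2 \<partial>M)
        = (\<integral>\<xi>. (norm v)\<^sup>2 + 2 * \<delta> * (v \<bullet> e \<xi>) + \<delta>\<^sup>2 * (norm (e \<xi>))\<^sup>2 \<partial>M)"
      unfolding pt ..
    also have "\<dots> = (norm v)\<^sup>2 + 2 * \<delta> * (v \<bullet> (\<integral>\<xi>. e \<xi> \<partial>M)) + \<delta>\<^sup>2 * V"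
      using eint i2 by (simp add: V_def P.prob_space)
    finally show ?thesis using e0 by simp
  qed
  define k where "k = \<delta> * \<mu>g / 2"
  have k0: "0 < k" "k \<le> 1/3" unfolding k_def using delta_pos mu_pos delta_le
    by (auto simp: field_simps)
  have vwc: "v = w + (c - b)" unfolding v_def w_def by simp
  have young: "(norm v)\<^sup>2 \<le> (1 / (1 - k)) * (norm w)\<^sup>2 + (1 / k) * (norm (c - b))\<^sup>2"
  proof -
    define p where "p = norm w"
    define q where "q = norm (c - b)"
    have "norm v \<le> p + q" unfolding vwc p_def q_def by (rule norm_triangle_ineq)
    hence "(norm v)\<^sup>2 \<le> (p + q)\<^sup>2" by (intro power_mono) auto
    also have "(p + q)\<^sup>2 \<le> (1 / (1 - k)) * p\<^sup>2 + (1 / k) * q\<^sup>2"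
    proof -
      have "0 \<le> (k * p - (1 - k) * q)\<^sup>2" by simp
      hence "2 * p * q * (k * (1 - k)) \<le> k\<^sup>2 * p\<^sup>2 + (1 - k)\<^sup>2 * q\<^sup>2"
        by (simp add: power2_eq_square algebra_simps)
      hence "(p + q)\<^sup>2 * (k * (1 - k)) \<le> k * p\<^sup>2 + (1 - k) * q\<^sup>2"
        by (simp add: power2_eq_square algebra_simps)
      thus ?thesis using k0 by (simp add: field_simps)
    qed
    finally show ?thesis unfolding p_def q_def .
  qed
  have t1: "(1 / (1 - k)) * (norm w)\<^sup>2 \<le> (1 - k) * r\<^sup>2"
  proof -
    have "(1 / (1 - k)) * (norm w)\<^sup>2 \<le> (1 / (1 - k)) * ((1 - 3 * k) * r\<^sup>2)"
      using wN k0 unfolding k_def by (intro mult_left_mono) auto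
    also have "\<dots> \<le> (1 - k) * r\<^sup>2"
    proof -
      have "(1 - 3 * k) \<le> (1 - k) * (1 - k)" using k0 by (simp add: algebra_simps)
      hence "(1 - 3 * k) * r\<^sup>2 \<le> (1 - k) * (1 - k) * r\<^sup>2" by (intro mult_right_mono) auto
      thus ?thesis using k0 by (simp add: field_simps)
    qed
    finally show ?thesis .
  qed
  have t2: "(1 / k) * (norm (c - b))\<^sup>2 \<le> 2 * \<eta>\<^sup>2 / (\<delta> * \<mu>g) * (Cxy / \<mu>g)\<^sup>2 * (diameter X)\<^sup>2"
  proof -
    have "(1 / k) * (norm (c - b))\<^sup>2 \<le> (1 / k) * ((Cxy / \<mu>g)\<^sup>2 * \<eta>\<^sup>2 * (diameter X)\<^sup>2)"
      using cb2 k0 by (intro mult_left_mono) auto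
    thus ?thesis unfolding k_def by (simp add: field_simps)
  qed
  have t3: "\<delta>\<^sup>2 * V \<le> 4 * \<delta>\<^sup>2 * \<sigma>g\<^sup>2"
  proof -
    have "\<delta>\<^sup>2 * V \<le> \<delta>\<^sup>2 * \<sigma>g\<^sup>2" using Vb by (intro mult_left_mono) auto
    moreover have "0 \<le> \<delta>\<^sup>2 * \<sigma>g\<^sup>2" by simp
    ultimately show ?thesis by linarith
  qed
  have "1 - \<delta> * \<mu>g / 2 = 1 - k" unfolding k_def ..
  show ?thesis
    unfolding E x'_def[symmetric] b_def[symmetric] c_def[symmetric] r_def[symmetric]
    using young t1 t2 t3 unfolding k_def by linarith
qed

end
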